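(* There exists a continuous function $f:\mathrm{SO}(4)\to S^3\times S^3$ such that for every rotation $R\in\mathrm{SO}(4)$, $d_4(R,\mathbf{R}_{QQ}(f(R)))\le\pi$.
   Context: Identify $\mathbb{R}^4$ with the quaternions via $(w,x,y,z)\leftrightarrow w+x\mathbf{i}+y\mathbf{j}+z\mathbf{k}$; $S^3$ is the set of unit quaternions. For $(\mathbf{q}_L,\mathbf{q}_R)\in S^3\times S^3$, $\mathbf{R}_{QQ}(\mathbf{q}_L,\mathbf{q}_R)\in\mathrm{SO}(4)$ is the rotation $\mathbf{p}\mapsto\mathbf{q}_L\mathbf{p}\mathbf{q}_R$; every element of $\mathrm{SO}(4)$ is of this form, with $(\mathbf{q}_L,\mathbf{q}_R)$ determined up to overall sign. For unit quaternions let $d_Q(\mathbf{p},\mathbf{q})=\cos^{-1}(\mathbf{p}\cdot\mathbf{q})$. For $R_1=\mathbf{R}_{QQ}(\mathbf{p}_L,\mathbf{p}_R)$ and $R_2=\mathbf{R}_{QQ}(\mathbf{q}_L,\mathbf{q}_R)$, $d_4(R_1,R_2)=\min\{a+b,2\pi-a-b\}+|a-b|$ where $a=d_Q(\mathbf{p}_L,\mathbf{q}_L)$, $b=d_Q(\mathbf{p}_R,\mathbf{q}_R)$ (independent of representatives; equal to $|\theta|+|\phi|$ where $e^{\pm i\theta},e^{\pm i\phi}$ are the eigenvalues of $R_2R_1^{-1}$). *)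

theory Defs
  imports "HOL-Analysis.Analysis"
begin

text \<open>Quaternions are identified with vectors in real^4: (w,x,y,z) with
  components q$1 = w, q$2 = x, q$3 = y, q$4 = z.\<close>

definition qmult :: "real^4 \<Rightarrow> real^4 \<Rightarrow> real^4" where
  "qmult p q = vector
     [ p$1*q$1 - p$2*q$2 - p$3*q$3 - p$4*q$4,
       p$1*q$2 + p$2*q$1 + p$3*q$4 - p$4*q$3,
       p$1*q$3 - p$2*q$4 + p$3*q$1 + p$4*q$2,
       p$1*q$4 + p$2*q$3 - p$3*q$2 + p$4*q$1 ]"

definition S3 :: "(real^4) set" where
  "S3 = sphere 0 1"

definition SO4 :: "(real^4^4) set" where
  "SO4 = {A. orthogonal_matrix A \<and> det A = 1}"

definition RQQ :: "real^4 \<Rightarrow> real^4 \<Rightarrow> real^4^4" where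
  "RQQ qL qR = matrix (\<lambda>p. qmult (qmult qL p) qR)"

definition dQ :: "real^4 \<Rightarrow> real^4 \<Rightarrow> real" where
  "dQ p q = arccos (p \<bullet> q)"

text \<open>d_4 via quaternion representatives (independent of the choice).\<close>
definition d4 :: "real^4^4 \<Rightarrow> real^4^4 \<Rightarrow> real" where
  "d4 R1 R2 = (SOME d. \<exists>pL pR qL qR.
      pL \<in> S3 \<and> pR \<in> S3 \<and> qL \<in> S3 \<and> qR \<in> S3 \<and>
      R1 = RQQ pL pR \<and> R2 = RQQ qL qR \<and>
      d = min (dQ pL qL + dQ pR qR) (2*pi - dQ pL qL - dQ pR qR)
          + \<bar>dQ pL qL - dQ pR qR\<bar>)"

end

theory Submission
  imports Defs
begin


lemma vector4 [simp]:
 "(vector [a,b,c,d] :: real^4)$1 = a"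
 "(vector [a,b,c,d] :: real^4)$2 = b"
 "(vector [a,b,c,d] :: real^4)$3 = c"
 "(vector [a,b,c,d] :: real^4)$4 = d"
  unfolding vector_def by simp_all

lemma qmult_nth [simp]:
  "qmult p q $ 1 = p$1*q$1 - p$2*q$2 - p$3*q$3 - p$4*q$4"
  "qmult p q $ 2 = p$1*q$2 + p$2*q$1 + p$3*q$4 - p$4*q$3"
  "qmult p q $ 3 = p$1*q$3 - p$2*q$4 + p$3*q$1 + p$4*q$2"
  "qmult p q $ 4 = p$1*q$4 + p$2*q$3 - p$3*q$2 + p$4*q$1"
  by (simp_all add: qmult_def)

lemma vec4_eq: "(x::real^4) = y \<longleftrightarrow> x$1 = y$1 \<and> x$2 = y$2 \<and> x$3 = y$3 \<and> x$4 = y$4"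
  by (simp add: vec_eq_iff forall_4)

lemma qmult_assoc: "qmult (qmult a b) c = qmult a (qmult b c)"
  by (simp add: vec4_eq algebra_simps)

lemma inner4: "(x::real^4) \<bullet> y = x$1*y$1 + x$2*y$2 + x$3*y$3 + x$4*y$4"
  by (simp add: inner_vec_def sum_4)

lemma norm4: "norm (x::real^4) = sqrt (x$1^2 + x$2^2 + x$3^2 + x$4^2)"
  by (simp add: norm_eq_sqrt_inner inner4 power2_eq_square)

lemma norm_qmult: "norm (qmult p q) = norm p * norm q"
  unfolding norm4 real_sqrt_mult[symmetric]
  by (rule arg_cong[where f=sqrt]) (simp add: algebra_simps power2_eq_square)

lemma linear_qmult_left: "linear (\<lambda>p. qmult p b)"
  by (rule linearI) (simp_all add: vec4_eq algebra_simps)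

lemma linear_qmult_right: "linear (\<lambda>p. qmult a p)"
  by (rule linearI) (simp_all add: vec4_eq algebra_simps)

lemma linear_RQQ: "linear (\<lambda>p. qmult (qmult a p) b)"
  using linear_compose[OF linear_qmult_right[of a] linear_qmult_left[of b]] by (simp add: o_def)

lemma RQQ_apply [simp]: "RQQ a b *v p = qmult (qmult a p) b"
  unfolding RQQ_def by (simp add: matrix_works linear_RQQ)

lemma RQQ_mult: "RQQ a b ** RQQ c d = RQQ (qmult a c) (qmult d b)"
  by (simp add: matrix_eq matrix_vector_mul_assoc[symmetric] qmult_assoc)

definition one4 :: "real^4" where "one4 = vector [1,0,0,0]"
definition qc :: "real^4 \<Rightarrow> real^4" where "qc q = vector [q$1, -q$2, -q$3, -q$4]"

lemma one4_nth [simp]: "one4$1 = 1" "one4$2 = 0" "one4$3 = 0" "one4$4 = 0"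
  by (simp_all add: one4_def)
lemma qc_nth [simp]: "qc q$1 = q$1" "qc q$2 = -q$2" "qc q$3 = -q$3" "qc q$4 = -q$4"
  by (simp_all add: qc_def)

lemma qmult_one [simp]: "qmult one4 p = p" "qmult p one4 = p"
  by (simp_all add: vec4_eq)

lemma RQQ_one: "RQQ one4 one4 = mat 1"
  by (simp add: matrix_eq)

lemma unit4: "norm (x::real^4) = 1 \<longleftrightarrow> x$1^2 + x$2^2 + x$3^2 + x$4^2 = 1"
  by (simp add: norm4)

lemma qc_mult: "norm a = 1 \<Longrightarrow> qmult (qc a) a = one4"
  "norm a = 1 \<Longrightarrow> qmult a (qc a) = one4"
  by (simp_all add: unit4 vec4_eq power2_eq_square algebra_simps)

lemma norm_qc [simp]: "norm (qc a) = norm a"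
  by (simp add: norm4)

lemma RQQ_inv: "norm a = 1 \<Longrightarrow> norm b = 1 \<Longrightarrow> RQQ (qc a) b ** RQQ a (qc b) = mat 1"
  "norm a = 1 \<Longrightarrow> norm b = 1 \<Longrightarrow> RQQ a (qc b) ** RQQ (qc a) b = mat 1"
  by (simp_all add: RQQ_mult qc_mult RQQ_one)

lemma RQQ_orth: "norm a = 1 \<Longrightarrow> norm b = 1 \<Longrightarrow> orthogonal_matrix (RQQ a b)"
proof -
  assume "norm a = 1" "norm b = 1"
  then have "orthogonal_transformation (\<lambda>p. qmult (qmult a p) b)"
    by (simp add: orthogonal_transformation linear_RQQ norm_qmult)
  then show ?thesis unfolding RQQ_def using orthogonal_transformation_matrix by blast
qed


lemma qsqrt: assumes "norm (a::real^4) = 1" shows "\<exists>c. norm c = 1 \<and> qmult c c = a"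
proof (cases "a$1 = -1")
  case True
  have u: "a$1^2 + a$2^2 + a$3^2 + a$4^2 = 1" using assms unit4 by blast
  then have "a$2^2 + a$3^2 + a$4^2 = 0" using True by simp
  then have "a$2 = 0" "a$3 = 0" "a$4 = 0" by (simp_all add: add_nonneg_eq_0_iff)
  then show ?thesis using True
    by (intro exI[of _ "vector [0,1,0,0]"]) (simp add: vec4_eq unit4)
next
  case False
  have u: "a$1^2 + a$2^2 + a$3^2 + a$4^2 = 1" using assms unit4 by blast
  have ge: "a$1 \<ge> -1" proof -
    have "a$1^2 \<le> 1" using u by (smt (verit) zero_le_power2)
    then show ?thesis using abs_le_square_iff[of "a$1" 1] by simp
  qed
  then have pos: "2 + 2*a$1 > 0" using False by linarith
  define s where "s = 1 / sqrt (2 + 2*a$1)"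
  have hs: "s^2 * (2 + 2*a$1) = 1" using pos by (simp add: s_def power_divide)
  let ?c = "vector [s*(1+a$1), s*a$2, s*a$3, s*a$4] :: real^4"
  have "norm ?c = 1" unfolding unit4
  proof -
    have "(s*(1+a$1))^2 + (s*a$2)^2 + (s*a$3)^2 + (s*a$4)^2 = s^2 * (1 + 2*a$1 + (a$1^2+a$2^2+a$3^2+a$4^2))" by algebra
    also have "\<dots> = 1" using hs u by (simp add: algebra_simps)
    finally show "?c$1^2 + ?c$2^2 + ?c$3^2 + ?c$4^2 = 1" by simp
  qed
  moreover have "qmult ?c ?c = a" unfolding vec4_eq
  proof (intro conjI)
    have "s*(1+a$1)*(s*(1+a$1)) - s*a$2*(s*a$2) - s*a$3*(s*a$3) - s*a$4*(s*a$4) = s^2 * (1 + 2*a$1 + 2*a$1^2 - (a$1^2+a$2^2+a$3^2+a$4^2))" by algebra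
    also have "\<dots> = s^2*(2+2*a$1)*a$1" using u by algebra
    also have "\<dots> = a$1" using hs by simp
    finally show "qmult ?c ?c $ 1 = a$1" by simp
    have "s*(1+a$1)*(s*a$2) + s*a$2*(s*(1+a$1)) + s*a$3*(s*a$4) - s*a$4*(s*a$3) = s^2*(2+2*a$1)*a$2" by algebra
    also have "\<dots> = a$2" using hs by simp
    finally show "qmult ?c ?c $ 2 = a$2" by simp
    have "s*(1+a$1)*(s*a$3) - s*a$2*(s*a$4) + s*a$3*(s*(1+a$1)) + s*a$4*(s*a$2) = s^2*(2+2*a$1)*a$3" by algebra
    also have "\<dots> = a$3" using hs by simp
    finally show "qmult ?c ?c $ 3 = a$3" by simp
    have "s*(1+a$1)*(s*a$4) + s*a$2*(s*a$3) - s*a$3*(s*a$2) + s*a$4*(s*(1+a$1)) = s^2*(2+2*a$1)*a$4" by algebra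
    also have "\<dots> = a$4" using hs by simp
    finally show "qmult ?c ?c $ 4 = a$4" by simp
  qed
  ultimately show ?thesis by blast
qed

lemma RQQ_det: assumes "norm a = 1" "norm b = 1" shows "det (RQQ a b) = 1"
proof -
  obtain c where c: "norm c = 1" "qmult c c = a" using qsqrt assms by blast
  obtain d where d: "norm d = 1" "qmult d d = b" using qsqrt assms by blast
  have "RQQ a b = RQQ c d ** RQQ c d" by (simp add: RQQ_mult c d)
  then have "det (RQQ a b) = det (RQQ c d) * det (RQQ c d)" by (simp add: det_mul)
  moreover have "det (RQQ c d) = 1 \<or> det (RQQ c d) = -1"
    using det_orthogonal_matrix RQQ_orth c d by blast
  ultimately show ?thesis by auto
qed

lemma RQQ_SO4: "norm a = 1 \<Longrightarrow> norm b = 1 \<Longrightarrow> RQQ a b \<in> SO4"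
  by (simp add: SO4_def RQQ_orth RQQ_det)

definition frob :: "real^4^4 \<Rightarrow> real^4^4 \<Rightarrow> real" where
  "frob A B = (\<Sum>i\<in>UNIV. \<Sum>j\<in>UNIV. A$i$j * B$i$j)"

lemma axis4 [simp]: "(axis (1::4) (1::real))$1 = 1" "(axis (1::4) (1::real))$2 = 0" "(axis (1::4) (1::real))$3 = 0" "(axis (1::4) (1::real))$4 = 0"
  "(axis (2::4) (1::real))$1 = 0" "(axis (2::4) (1::real))$2 = 1" "(axis (2::4) (1::real))$3 = 0" "(axis (2::4) (1::real))$4 = 0"
  "(axis (3::4) (1::real))$1 = 0" "(axis (3::4) (1::real))$2 = 0" "(axis (3::4) (1::real))$3 = 1" "(axis (3::4) (1::real))$4 = 0"
  "(axis (4::4) (1::real))$1 = 0" "(axis (4::4) (1::real))$2 = 0" "(axis (4::4) (1::real))$3 = 0" "(axis (4::4) (1::real))$4 = 1"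
  by (simp_all add: axis_def)

lemma frob_RQQ: "frob (RQQ a b) (RQQ c d) = 4 * (a \<bullet> c) * (b \<bullet> d)"
  unfolding frob_def RQQ_def matrix_def inner4
  apply (simp add: sum_4)
  by algebra


lemma orth_inner: "orthogonal_matrix (A::real^4^4) \<Longrightarrow> (A *v x) \<bullet> (A *v y) = x \<bullet> y"
  using orthogonal_transformation_matrix[of "\<lambda>x. A *v x"]
  by (simp add: matrix_vector_mul_linear orthogonal_transformation_def)

lemma orth_norm: "orthogonal_matrix (A::real^4^4) \<Longrightarrow> norm (A *v x) = norm x"
  by (simp add: norm_eq_sqrt_inner orth_inner)

lemma SO4_mult: "A \<in> SO4 \<Longrightarrow> B \<in> SO4 \<Longrightarrow> A ** B \<in> SO4"
  by (simp add: SO4_def orthogonal_matrix_mul det_mul)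

lemma rot2: assumes "u^2 + v^2 = (1::real)" shows "\<exists>a b. a^2+b^2=1 \<and> a^2-b^2=u \<and> 2*a*b=v"
proof -
  have u1: "u^2 \<le> 1" using assms by (smt (verit) zero_le_power2)
  then have h: "-1 \<le> u" "u \<le> 1" using abs_le_square_iff[of u 1] by auto
  define \<sigma> where "\<sigma> = (if v \<ge> 0 then 1 else -1::real)"
  define a where "a = sqrt ((1+u)/2)"
  define b where "b = \<sigma> * sqrt ((1-u)/2)"
  have a2: "a^2 = (1+u)/2" using h by (simp add: a_def)
  have b2: "b^2 = (1-u)/2" using h by (simp add: b_def \<sigma>_def power_mult_distrib)
  have s4: "sqrt 4 = (2::real)" by (rule real_sqrt_unique) auto
  have "2*a*b = 2*\<sigma>* sqrt (((1+u)/2)*((1-u)/2))" by (simp only: a_def b_def real_sqrt_mult) (simp add: mult_ac)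
  also have "((1+u)/2)*((1-u)/2) = (1-u^2)/4" by (simp add: algebra_simps power2_eq_square)
  also have "2*\<sigma>* sqrt ((1-u^2)/4) = \<sigma> * sqrt (1 - u^2)" by (simp add: real_sqrt_divide s4)
  also have "\<dots> = \<sigma> * \<bar>v\<bar>" using assms by (simp flip: real_sqrt_abs add: algebra_simps)
  also have "\<dots> = v" by (simp add: \<sigma>_def)
  finally show ?thesis using a2 b2 by (intro exI[of _ a] exI[of _ b]) simp
qed

lemma rot3: assumes "x^2 + y^2 + z^2 = (1::real)"
  shows "\<exists>a c d. a^2+c^2+d^2=1 \<and> a^2-c^2-d^2=x \<and> 2*a*d=y \<and> -2*a*c=z"
proof (cases "x = -1")
  case True
  then have "y^2 + z^2 = 0" using assms by simp
  then have "y = 0" "z = 0" by (simp_all add: add_nonneg_eq_0_iff)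
  then show ?thesis using True by (intro exI[of _ 0] exI[of _ 1]) simp
next
  case False
  have "x^2 \<le> 1" using assms by (smt (verit) zero_le_power2)
  then have h: "-1 \<le> x" "x \<le> 1" using abs_le_square_iff[of x 1] by auto
  then have pos: "1 + x > 0" using False by linarith
  define a where "a = sqrt ((1+x)/2)"
  have a2: "a^2 = (1+x)/2" using h by (simp add: a_def)
  have apos: "a > 0" using pos by (simp add: a_def)
  define c where "c = -z/(2*a)"
  define d where "d = y/(2*a)"
  have cd: "c^2 + d^2 = (y^2+z^2)/(4*a^2)" using apos
    by (simp add: c_def d_def power_divide field_simps power2_eq_square)
  have yz: "y^2+z^2 = (1-x)*(1+x)" using assms by (simp add: algebra_simps power2_eq_square)
  have cd2: "c^2 + d^2 = (1-x)/2" unfolding cd yz a2 using pos by (simp add: field_simps)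
  show ?thesis
    apply (rule exI[of _ a], rule exI[of _ c], rule exI[of _ d])
  proof (intro conjI)
    show "a^2+c^2+d^2=1" using cd2 a2 by simp
    show "a^2-c^2-d^2=x" using cd2 a2 by simp
    show "2*a*d=y" using apos by (simp add: d_def)
    show "-2*a*c=z" using apos by (simp add: c_def)
  qed
qed



definition e2 :: "real^4" where "e2 = vector [0,1,0,0]"
definition e3 :: "real^4" where "e3 = vector [0,0,1,0]"
definition e4 :: "real^4" where "e4 = vector [0,0,0,1]"
lemma e_nth [simp]: "e2$1 = 0" "e2$2 = 1" "e2$3 = 0" "e2$4 = 0"
  "e3$1 = 0" "e3$2 = 0" "e3$3 = 1" "e3$4 = 0"
  "e4$1 = 0" "e4$2 = 0" "e4$3 = 0" "e4$4 = 1"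
  by (simp_all add: e2_def e3_def e4_def)

lemma norm_one4 [simp]: "norm one4 = 1" by (simp add: norm4)

lemma mv_nth: "(M *v (x::real^4)) $ i = M$i$1*x$1 + M$i$2*x$2 + M$i$3*x$3 + M$i$4*x$4"
  by (simp add: matrix_vector_mult_def sum_4)

lemma prod_4: "prod f (UNIV::4 set) = f 1 * f 2 * f 3 * f 4"
  unfolding UNIV_4 by (simp add: ac_simps)

lemma SO4_surj: assumes "A \<in> SO4" shows "\<exists>a b. norm a = 1 \<and> norm b = 1 \<and> A = RQQ a b"
proof -
  have oA: "orthogonal_matrix A" using assms by (simp add: SO4_def)
  define w where "w = A *v one4"
  have nw: "norm w = 1" using orth_norm[OF oA] by (simp add: w_def unit4)
  define M1 where "M1 = RQQ (qc w) one4 ** A"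
  have M1: "M1 \<in> SO4" unfolding M1_def using assms nw by (intro SO4_mult RQQ_SO4) simp_all
  have M1a: "M1 *v one4 = one4"
    by (simp add: M1_def matrix_vector_mul_assoc[symmetric] w_def[symmetric] qc_mult nw)
  define v where "v = M1 *v e2"
  have o1: "orthogonal_matrix M1" using M1 by (simp add: SO4_def)
  have "v \<bullet> one4 = 0" using orth_inner[OF o1, of e2 one4] by (simp add: v_def M1a inner4)
  then have v1: "v$1 = 0" by (simp add: inner4)
  have "norm v = 1" using orth_norm[OF o1, of e2] by (simp add: v_def unit4)
  then have "v$2^2 + v$3^2 + v$4^2 = 1" using v1 by (simp add: unit4)
  then obtain a c d where acd: "a^2+c^2+d^2=1" "a^2-c^2-d^2=v$2" "2*a*d=v$3" "-2*a*c=v$4"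
    using rot3 by blast
  define q :: "real^4" where "q = vector [a,0,c,d]"
  have nq: "norm q = 1" using acd by (simp add: q_def unit4)
  have hq: "RQQ q (qc q) *v e2 = v"
  proof -
    have "RQQ q (qc q) *v e2 = vector [0, a^2-c^2-d^2, 2*a*d, -2*a*c]"
      unfolding vec4_eq by (simp add: q_def power2_eq_square algebra_simps)
    then show ?thesis using acd v1 by (simp add: vec4_eq)
  qed
  define M2 where "M2 = RQQ (qc q) q ** M1"
  have M2: "M2 \<in> SO4" unfolding M2_def using M1 nq by (intro SO4_mult RQQ_SO4) simp_all
  have o2: "orthogonal_matrix M2" using M2 by (simp add: SO4_def)
  have M2a: "M2 *v one4 = one4"
    by (simp add: M2_def matrix_vector_mul_assoc[symmetric] M1a qc_mult nq)
  have M2b: "M2 *v e2 = e2"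
    by (simp add: M2_def matrix_vector_mul_assoc[symmetric] v_def[symmetric] hq[symmetric]
       matrix_vector_mul_assoc RQQ_inv nq del: RQQ_apply)
  define u where "u = M2 *v e3"
  have "u \<bullet> one4 = 0" using orth_inner[OF o2, of e3 one4] by (simp add: u_def M2a inner4)
  then have u1: "u$1 = 0" by (simp add: inner4)
  have "u \<bullet> e2 = 0" using orth_inner[OF o2, of e3 e2] by (simp add: u_def M2b inner4)
  then have u2: "u$2 = 0" by (simp add: inner4)
  have "norm u = 1" using orth_norm[OF o2, of e3] by (simp add: u_def unit4)
  then have "u$3^2 + u$4^2 = 1" using u1 u2 by (simp add: unit4)
  then obtain a' b' where ab: "a'^2+b'^2=1" "a'^2-b'^2=u$3" "2*a'*b'=u$4"
    using rot2 by blast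
  define q' :: "real^4" where "q' = vector [a',b',0,0]"
  have nq': "norm q' = 1" using ab by (simp add: q'_def unit4)
  have hq': "RQQ q' (qc q') *v e3 = u"
  proof -
    have "RQQ q' (qc q') *v e3 = vector [0, 0, a'^2-b'^2, 2*a'*b']"
      unfolding vec4_eq by (simp add: q'_def power2_eq_square algebra_simps)
    then show ?thesis unfolding \<open>RQQ q' (qc q') *v e3 = _\<close> using ab u1 u2 by (simp add: vec4_eq)
  qed
  define M3 where "M3 = RQQ (qc q') q' ** M2"
  have M3: "M3 \<in> SO4" unfolding M3_def using M2 nq' by (intro SO4_mult RQQ_SO4) simp_all
  have o3: "orthogonal_matrix M3" using M3 by (simp add: SO4_def)
  have M3a: "M3 *v one4 = one4"
    by (simp add: M3_def matrix_vector_mul_assoc[symmetric] M2a qc_mult nq')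
  have M3b: "M3 *v e2 = e2"
    unfolding M3_def matrix_vector_mul_assoc[symmetric] M2b
  proof -
    have "RQQ (qc q') q' *v e2 = vector [0, a'^2+b'^2, 0, 0]"
      unfolding vec4_eq by (simp add: q'_def power2_eq_square algebra_simps)
    then show "RQQ (qc q') q' *v e2 = e2" unfolding \<open>RQQ (qc q') q' *v e2 = _\<close> using ab by (simp add: vec4_eq)
  qed
  have M3c: "M3 *v e3 = e3"
    by (simp add: M3_def matrix_vector_mul_assoc[symmetric] u_def[symmetric] hq'[symmetric]
       matrix_vector_mul_assoc RQQ_inv nq' del: RQQ_apply)
  define z where "z = M3 *v e4"
  have "z \<bullet> one4 = 0" using orth_inner[OF o3, of e4 one4] by (simp add: z_def M3a inner4)
  then have z1: "z$1 = 0" by (simp add: inner4)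
  have "z \<bullet> e2 = 0" using orth_inner[OF o3, of e4 e2] by (simp add: z_def M3b inner4)
  then have z2: "z$2 = 0" by (simp add: inner4)
  have "z \<bullet> e3 = 0" using orth_inner[OF o3, of e4 e3] by (simp add: z_def M3c inner4)
  then have z3: "z$3 = 0" by (simp add: inner4)
  have c1: "M3$i$1 = one4$i" for i using arg_cong[OF M3a, of "\<lambda>x. x$i"] by (simp add: mv_nth)
  have c2: "M3$i$2 = e2$i" for i using arg_cong[OF M3b, of "\<lambda>x. x$i"] by (simp add: mv_nth)
  have c3: "M3$i$3 = e3$i" for i using arg_cong[OF M3c, of "\<lambda>x. x$i"] by (simp add: mv_nth)
  have c4: "M3$i$4 = z$i" for i by (simp add: z_def mv_nth)
  have ent: "M3$i$j = (if i = j then (if i = 4 then z$4 else 1) else 0)" for i j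
    using exhaust_4[of i] exhaust_4[of j]
    by (elim disjE) (simp_all add: c1 c2 c3 c4 z1 z2 z3)
  have "det M3 = prod (\<lambda>i. M3$i$i) UNIV" by (rule det_diagonal) (simp add: ent)
  also have "\<dots> = M3$1$1 * M3$2$2 * M3$3$3 * M3$4$4" by (rule prod_4)
  also have "\<dots> = z$4" using c1 c2 c3 c4 by simp
  finally have "z$4 = 1" using M3 by (simp add: SO4_def)
  then have "M3 = mat 1" by (simp add: vec_eq_iff mat_def ent)
  have "RQQ q' (qc q') ** M3 = M2" unfolding M3_def
    by (simp add: matrix_mul_assoc RQQ_inv nq')
  then have "RQQ q (qc q) ** (RQQ q' (qc q') ** M3) = M1" unfolding M2_def
    by (simp add: matrix_mul_assoc RQQ_inv nq)
  moreover have "qc one4 = one4" by (simp add: vec4_eq)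
  ultimately have "RQQ w one4 ** (RQQ q (qc q) ** (RQQ q' (qc q') ** M3)) = A" unfolding M1_def
    using RQQ_inv(2)[OF nw, of one4] by (simp add: matrix_mul_assoc norm4)
  then have "A = RQQ (qmult w (qmult q q')) (qmult (qc q') (qc q))"
    using \<open>M3 = mat 1\<close> by (simp add: RQQ_mult)
  moreover have "norm (qmult w (qmult q q')) = 1" "norm (qmult (qc q') (qc q)) = 1"
    using nw nq nq' by (simp_all add: norm_qmult)
  ultimately show ?thesis by blast
qed


lemma bound_ab:
  fixes a b :: real
  assumes "0 \<le> a" "a \<le> pi" "0 \<le> b" "b \<le> pi" "cos a * cos b \<ge> 0"
  shows "min (a + b) (2*pi - a - b) + \<bar>a - b\<bar> \<le> pi"
proof -
  have ca: "a < pi/2 \<Longrightarrow> cos a > 0" using assms by (intro cos_gt_zero_pi) auto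
  have cb: "b < pi/2 \<Longrightarrow> cos b > 0" using assms by (intro cos_gt_zero_pi) auto
  have ca': "cos a < 0" if "a > pi/2"
  proof -
    have "cos (pi - a) > 0" using assms that by (intro cos_gt_zero_pi) auto
    then show ?thesis by simp
  qed
  have cb': "cos b < 0" if "b > pi/2"
  proof -
    have "cos (pi - b) > 0" using assms that by (intro cos_gt_zero_pi) auto
    then show ?thesis by simp
  qed
  have "(a \<le> pi/2 \<and> b \<le> pi/2) \<or> (a \<ge> pi/2 \<and> b \<ge> pi/2)"
  proof (rule ccontr)
    assume "\<not> ?thesis"
    then have "(a < pi/2 \<and> b > pi/2) \<or> (a > pi/2 \<and> b < pi/2)" by auto
    then have "cos a * cos b < 0"
    proof
      assume "a < pi/2 \<and> b > pi/2" then show ?thesis using ca cb' mult_pos_neg by blast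
    next
      assume "a > pi/2 \<and> b < pi/2" then show ?thesis using ca' cb mult_neg_pos by blast
    qed
    then show False using assms by simp
  qed
  then show ?thesis
  proof
    assume h: "a \<le> pi/2 \<and> b \<le> pi/2"
    then have "min (a + b) (2*pi - a - b) \<le> a + b" by simp
    moreover have "a + b + \<bar>a - b\<bar> \<le> pi" using h by (simp add: abs_if)
    ultimately show ?thesis by linarith
  next
    assume h: "a \<ge> pi/2 \<and> b \<ge> pi/2"
    then have "min (a + b) (2*pi - a - b) \<le> 2*pi - a - b" by simp
    moreover have "2*pi - a - b + \<bar>a - b\<bar> \<le> pi" using h by (simp add: abs_if)
    ultimately show ?thesis by linarith
  qed
qed

lemma cos_dQ: "norm x = 1 \<Longrightarrow> norm y = 1 \<Longrightarrow> cos (dQ x y) = x \<bullet> y"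
  "norm x = 1 \<Longrightarrow> norm y = 1 \<Longrightarrow> 0 \<le> dQ x y"
  "norm x = 1 \<Longrightarrow> norm y = 1 \<Longrightarrow> dQ x y \<le> pi"
proof -
  assume "norm x = 1" "norm y = 1"
  then have "\<bar>x \<bullet> y\<bar> \<le> 1" using Cauchy_Schwarz_ineq2[of x y] by simp
  then have h: "-1 \<le> x \<bullet> y" "x \<bullet> y \<le> 1" by auto
  show "cos (dQ x y) = x \<bullet> y" using h by (simp add: dQ_def)
  show "0 \<le> dQ x y" using h by (simp add: dQ_def arccos_lbound)
  show "dQ x y \<le> pi" using h by (simp add: dQ_def arccos_ubound)
qed

lemma d4_le:
  assumes u: "norm pL = 1" "norm pR = 1" "norm qL = 1" "norm qR = 1"
    and R1: "R1 = RQQ pL pR" and R2: "R2 = RQQ qL qR"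
    and pos: "(pL \<bullet> qL) * (pR \<bullet> qR) \<ge> 0"
  shows "d4 R1 R2 \<le> pi"
proof -
  define P where "P = (\<lambda>d. \<exists>pL pR qL qR.
      pL \<in> S3 \<and> pR \<in> S3 \<and> qL \<in> S3 \<and> qR \<in> S3 \<and>
      R1 = RQQ pL pR \<and> R2 = RQQ qL qR \<and>
      d = min (dQ pL qL + dQ pR qR) (2*pi - dQ pL qL - dQ pR qR)
          + \<bar>dQ pL qL - dQ pR qR\<bar>)"
  have s3: "pL \<in> S3" "pR \<in> S3" "qL \<in> S3" "qR \<in> S3" using u by (simp_all add: S3_def)
  have "P (min (dQ pL qL + dQ pR qR) (2*pi - dQ pL qL - dQ pR qR) + \<bar>dQ pL qL - dQ pR qR\<bar>)"
    unfolding P_def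
    apply (rule exI[of _ pL], rule exI[of _ pR], rule exI[of _ qL], rule exI[of _ qR])
    using s3 R1 R2 by blast
  then have "P (SOME d. P d)" by (rule someI)
  moreover have "d4 R1 R2 = (SOME d. P d)" unfolding d4_def P_def by (rule refl)
  ultimately have "P (d4 R1 R2)" by simp
  then obtain pL' pR' qL' qR' where v: "pL' \<in> S3" "pR' \<in> S3" "qL' \<in> S3" "qR' \<in> S3"
    and e: "R1 = RQQ pL' pR'" "R2 = RQQ qL' qR'"
    and d: "d4 R1 R2 = min (dQ pL' qL' + dQ pR' qR') (2*pi - dQ pL' qL' - dQ pR' qR') + \<bar>dQ pL' qL' - dQ pR' qR'\<bar>"
    unfolding P_def by blast
  have n: "norm pL' = 1" "norm pR' = 1" "norm qL' = 1" "norm qR' = 1" using v by (auto simp: S3_def)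
  have "4 * (pL' \<bullet> qL') * (pR' \<bullet> qR') = frob R1 R2" unfolding e by (rule frob_RQQ[symmetric])
  also have "\<dots> = 4 * (pL \<bullet> qL) * (pR \<bullet> qR)" unfolding R1 R2 by (rule frob_RQQ)
  finally have "(pL' \<bullet> qL') * (pR' \<bullet> qR') \<ge> 0" using pos by simp
  then have c: "cos (dQ pL' qL') * cos (dQ pR' qR') \<ge> 0" using n by (simp add: cos_dQ)
  show ?thesis unfolding d
    by (rule bound_ab[OF cos_dQ(2)[OF n(1,3)] cos_dQ(3)[OF n(1,3)] cos_dQ(2)[OF n(2,4)] cos_dQ(3)[OF n(2,4)] c])
qed

theorem theorem13:
  shows "\<exists>f :: real^4^4 \<Rightarrow> (real^4) \<times> (real^4).
           continuous_on SO4 f \<and> f ` SO4 \<subseteq> S3 \<times> S3 \<and>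
           (\<forall>R\<in>SO4. d4 R (RQQ (fst (f R)) (snd (f R))) \<le> pi)"
proof (intro exI conjI)
  let ?f = "\<lambda>R::real^4^4. ((\<chi> i. R$i$1) :: real^4, one4)"
  have fe: "(\<chi> i. R$i$1) = R *v one4" for R :: "real^4^4" by (simp add: vec_eq_iff mv_nth)
  show "continuous_on SO4 ?f"
    by (intro continuous_intros)
  show "?f ` SO4 \<subseteq> S3 \<times> S3"
  proof
    fix y assume "y \<in> ?f ` SO4"
    then obtain R where R: "R \<in> SO4" "y = ?f R" by blast
    have "norm (R *v one4) = 1" using R orth_norm[of R one4] by (simp add: SO4_def)
    then show "y \<in> S3 \<times> S3" using R fe by (simp add: S3_def)
  qed
  show "\<forall>R\<in>SO4. d4 R (RQQ (fst (?f R)) (snd (?f R))) \<le> pi"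
  proof
    fix R assume R: "R \<in> SO4"
    obtain a b where ab: "norm a = 1" "norm b = 1" "R = RQQ a b" using SO4_surj[OF R] by blast
    have w: "R *v one4 = qmult a b" using ab by simp
    have "a \<bullet> qmult a b = (a$1^2 + a$2^2 + a$3^2 + a$4^2) * b$1"
      unfolding inner4 qmult_nth by algebra
    then have "(a \<bullet> qmult a b) * (b \<bullet> one4) = (b$1)^2"
      using ab by (simp add: inner4 unit4 power2_eq_square)
    then show "d4 R (RQQ (fst (?f R)) (snd (?f R))) \<le> pi"
      using ab w fe by (intro d4_le[of a b "qmult a b" one4]) (simp_all add: norm_qmult)
  qed
qed

end
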